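(* For every $n\ge 0$ and every monotone language $L\subseteq\{0,1\}^n$, the minimal PDFA recognizing $L$ has at most \[ \sum_{i=0}^n \min\bigl(2^i,\ |F_{n-i}|-1\bigr) \] states. Moreover, for each $n\le 10$ there is a monotone language $L\subseteq\{0,1\}^n$ whose minimal PDFA has exactly this many states.
   Context: A PDFA is a deterministic finite automaton whose transition function may be partial; the minimal PDFA of $L$ is one recognizing $L$ with the least number of states. A language $L\subseteq\{0,1\}^n$ is monotone if whenever $s\in L$ and $t\in\{0,1\}^n$ pointwise dominates $s$ (i.e., $s(j)\le t(j)$ for all $j$), then $t\in L$. $F_k$ denotes the set of monotone Boolean functions of $k$ variables (including the constants $0$ and $1$); $|F_k|$ is the $k$th Dedekind number. *)

theory Defs
  imports Main
begin

text \<open>Words over the alphabet {0,1} are bool lists (False = 0, True = 1).\<close>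

definition is_pdfa :: "nat set \<Rightarrow> nat \<Rightarrow> (nat \<Rightarrow> bool \<Rightarrow> nat option) \<Rightarrow> nat set \<Rightarrow> bool" where
  "is_pdfa Q q0 d F \<longleftrightarrow> finite Q \<and> q0 \<in> Q \<and> F \<subseteq> Q \<and>
     (\<forall>q\<in>Q. \<forall>a q'. d q a = Some q' \<longrightarrow> q' \<in> Q)"

fun pdfa_run :: "(nat \<Rightarrow> bool \<Rightarrow> nat option) \<Rightarrow> nat \<Rightarrow> bool list \<Rightarrow> nat option" where
  "pdfa_run d q [] = Some q"
| "pdfa_run d q (a # w) = (case d q a of None \<Rightarrow> None | Some q' \<Rightarrow> pdfa_run d q' w)"

definition pdfa_lang :: "nat \<Rightarrow> (nat \<Rightarrow> bool \<Rightarrow> nat option) \<Rightarrow> nat set \<Rightarrow> bool list set" where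
  "pdfa_lang q0 d F = {w. \<exists>q. pdfa_run d q0 w = Some q \<and> q \<in> F}"

definition min_pdfa_states :: "bool list set \<Rightarrow> nat" where
  "min_pdfa_states L = (LEAST k. \<exists>Q q0 d F. is_pdfa Q q0 d F \<and> pdfa_lang q0 d F = L \<and> card Q = k)"

definition monotone_lang :: "nat \<Rightarrow> bool list set \<Rightarrow> bool" where
  "monotone_lang n L \<longleftrightarrow> L \<subseteq> {w. length w = n} \<and>
     (\<forall>s\<in>L. \<forall>t. length t = n \<and> (\<forall>j<n. s ! j \<le> t ! j) \<longrightarrow> t \<in> L)"

text \<open>F_k: monotone Boolean functions of k variables, as functions on {0,1}^k
  (represented extensionally: value False outside words of length k).\<close>
definition monotone_bool_funs :: "nat \<Rightarrow> (bool list \<Rightarrow> bool) set" where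
  "monotone_bool_funs k = {f. (\<forall>w. length w \<noteq> k \<longrightarrow> f w = False) \<and>
     (\<forall>s t. length s = k \<and> length t = k \<and> (\<forall>j<k. s ! j \<le> t ! j) \<longrightarrow> f s \<le> f t)}"

end

theory Submission
  imports Defs
begin


definition deriv :: "bool list \<Rightarrow> bool list set \<Rightarrow> bool list set" where
  "deriv w L = {v. w @ v \<in> L}"

definition Res :: "bool list set \<Rightarrow> bool list set set" where
  "Res L = {deriv w L | w. deriv w L \<noteq> {}}"

definition ResI :: "bool list set \<Rightarrow> nat \<Rightarrow> bool list set set" where
  "ResI L i = {deriv w L | w. length w = i \<and> deriv w L \<noteq> {}}"

lemma deriv_Nil[simp]: "deriv [] L = L" by (simp add: deriv_def)
lemma deriv_deriv[simp]: "deriv v (deriv w L) = deriv (w @ v) L" by (simp add: deriv_def)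
lemma deriv_empty[simp]: "deriv w {} = {}" by (simp add: deriv_def)

lemma run_append:
  "pdfa_run d q (u @ v) = (case pdfa_run d q u of None \<Rightarrow> None | Some q' \<Rightarrow> pdfa_run d q' v)"
  by (induction u arbitrary: q) (auto split: option.splits)

lemma run_in_Q:
  assumes "is_pdfa Q q0 d F" "q \<in> Q" "pdfa_run d q w = Some q'"
  shows "q' \<in> Q"
  using assms(2,3)
proof (induction w arbitrary: q)
  case Nil then show ?case by simp
next
  case (Cons a w)
  then obtain q1 where "d q a = Some q1" "pdfa_run d q1 w = Some q'"
    by (auto split: option.splits)
  moreover have "q1 \<in> Q" using assms(1) Cons.prems(1) calculation(1) unfolding is_pdfa_def by blast
  ultimately show ?case using Cons.IH by blast
qed

lemma lower_bound:
  assumes P: "is_pdfa Q q0 d F" and L: "pdfa_lang q0 d F = L"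
  shows "card (Res L) \<le> card Q"
proof -
  let ?h = "\<lambda>q. {v. \<exists>q'. pdfa_run d q v = Some q' \<and> q' \<in> F}"
  have fQ: "finite Q" using P unfolding is_pdfa_def by blast
  have "Res L \<subseteq> ?h ` Q"
  proof
    fix X assume "X \<in> Res L"
    then obtain w where X: "X = deriv w L" and ne: "deriv w L \<noteq> {}" unfolding Res_def by blast
    then obtain v where "w @ v \<in> L" unfolding deriv_def by blast
    then obtain q' where "pdfa_run d q0 (w @ v) = Some q'" using L unfolding pdfa_lang_def by blast
    then obtain q where q: "pdfa_run d q0 w = Some q" by (auto simp: run_append split: option.splits)
    have "q \<in> Q" using run_in_Q[OF P _ q] P unfolding is_pdfa_def by blast
    moreover have "X = ?h q" using q L unfolding X deriv_def pdfa_lang_def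
      by (auto simp: run_append)
    ultimately show "X \<in> ?h ` Q" by blast
  qed
  then have "card (Res L) \<le> card (?h ` Q)" using fQ by (intro card_mono) auto
  also have "\<dots> \<le> card Q" using fQ by (rule card_image_le)
  finally show ?thesis .
qed

lemma Res_closed: "X \<in> Res L \<Longrightarrow> deriv [a] X \<noteq> {} \<Longrightarrow> deriv [a] X \<in> Res L"
  unfolding Res_def by auto

lemma upper_construct:
  assumes fin: "finite (Res L)" and ne: "L \<noteq> {}"
  shows "\<exists>Q q0 d F. is_pdfa Q q0 d F \<and> pdfa_lang q0 d F = L \<and> card Q = card (Res L)"
proof -
  let ?R = "Res L"
  obtain f :: "bool list set \<Rightarrow> nat" and N where fR: "f ` ?R = {i. i < N}" and inj: "inj_on f ?R"
    using finite_imp_inj_to_nat_seg[OF fin] by blast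
  define Q where "Q = f ` ?R"
  define d where "d = (\<lambda>q a. if q \<in> Q \<and> deriv [a] (inv_into ?R f q) \<noteq> {}
        then Some (f (deriv [a] (inv_into ?R f q))) else None)"
  define F where "F = f ` {X \<in> ?R. [] \<in> X}"
  have LR: "L \<in> ?R" using ne unfolding Res_def by (auto intro: exI[of _ "[]"])
  have run: "pdfa_run d (f X) w = (if deriv w X \<noteq> {} then Some (f (deriv w X)) else None)"
    if "X \<in> ?R" for X w
    using that
  proof (induction w arbitrary: X)
    case Nil then show ?case unfolding Res_def by auto
  next
    case (Cons a w)
    have inv: "inv_into ?R f (f X) = X" using inv_into_f_f[OF inj Cons.prems] .
    show ?case
    proof (cases "deriv [a] X = {}")
      case True
      then have "deriv (a # w) X = {}"
        using deriv_deriv[of w "[a]" X] by simp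
      then show ?thesis using True Cons.prems inv by (simp add: d_def Q_def)
    next
      case False
      have Y: "deriv [a] X \<in> ?R" using Res_closed[OF Cons.prems False] .
      have "pdfa_run d (f X) (a # w) = pdfa_run d (f (deriv [a] X)) w"
        using False Cons.prems inv by (simp add: d_def Q_def)
      also have "\<dots> = (if deriv (a # w) X \<noteq> {} then Some (f (deriv (a # w) X)) else None)"
        using Cons.IH[OF Y] deriv_deriv[of w "[a]" X] by simp
      finally show ?thesis .
    qed
  qed
  have "is_pdfa Q (f L) d F"
    unfolding is_pdfa_def
  proof (intro conjI)
    show "finite Q" using fin Q_def by simp
    show "f L \<in> Q" using LR Q_def by simp
    show "F \<subseteq> Q" unfolding F_def Q_def by blast
    show "\<forall>q\<in>Q. \<forall>a q'. d q a = Some q' \<longrightarrow> q' \<in> Q"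
    proof (intro ballI allI impI)
      fix q a q' assume q: "q \<in> Q" and "d q a = Some q'"
      then have ne': "deriv [a] (inv_into ?R f q) \<noteq> {}" and q': "q' = f (deriv [a] (inv_into ?R f q))"
        by (auto simp: d_def split: if_splits)
      have "inv_into ?R f q \<in> ?R" using q Q_def by (simp add: inv_into_into)
      then show "q' \<in> Q" using Res_closed[OF _ ne'] q' Q_def by blast
    qed
  qed
  moreover have "pdfa_lang (f L) d F = L"
  proof (rule set_eqI)
    fix w
    have "w \<in> pdfa_lang (f L) d F \<longleftrightarrow> deriv w L \<noteq> {} \<and> f (deriv w L) \<in> F"
      unfolding pdfa_lang_def using run[OF LR, of w] by auto
    also have "\<dots> \<longleftrightarrow> deriv w L \<noteq> {} \<and> [] \<in> deriv w L"
    proof -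
      have "deriv w L \<noteq> {} \<Longrightarrow> deriv w L \<in> ?R" unfolding Res_def by blast
      then show ?thesis unfolding F_def using inj by (auto dest: inj_onD)
    qed
    also have "\<dots> \<longleftrightarrow> w \<in> L" unfolding deriv_def by (auto intro: exI[of _ "[]"])
    finally show "w \<in> pdfa_lang (f L) d F \<longleftrightarrow> w \<in> L" .
  qed
  moreover have "card Q = card ?R" unfolding Q_def using inj by (simp add: card_image)
  ultimately show ?thesis by blast
qed

lemma min_states_eq:
  assumes "finite (Res L)" "L \<noteq> {}"
  shows "min_pdfa_states L = card (Res L)"
  unfolding min_pdfa_states_def
proof (rule Least_equality)
  show "\<exists>Q q0 d F. is_pdfa Q q0 d F \<and> pdfa_lang q0 d F = L \<and> card Q = card (Res L)"
    using upper_construct[OF assms] .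
next
  fix y assume "\<exists>Q q0 d F. is_pdfa Q q0 d F \<and> pdfa_lang q0 d F = L \<and> card Q = y"
  then show "card (Res L) \<le> y" using lower_bound by blast
qed

lemma min_states_empty: "min_pdfa_states {} \<le> 1"
proof -
  have "is_pdfa {0} 0 (\<lambda>_ _. None) {} \<and> pdfa_lang 0 (\<lambda>_ _. None) {} = {} \<and> card {0::nat} = 1"
    by (auto simp: is_pdfa_def pdfa_lang_def)
  then show ?thesis unfolding min_pdfa_states_def by (intro Least_le) blast
qed

lemma words_eq: "{w::bool list. length w = i} = {xs. set xs \<subseteq> UNIV \<and> length xs = i}" by simp
lemma finite_words: "finite {w::bool list. length w = i}"
  unfolding words_eq by (rule finite_lists_length_eq) simp
lemma card_words: "card {w::bool list. length w = i} = 2 ^ i"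
  unfolding words_eq by (subst card_lists_length_eq) simp_all

lemma mbf_sub: "monotone_bool_funs k \<subseteq> (\<lambda>S v. v \<in> S) ` Pow {w. length w = k}"
proof
  fix f assume f: "f \<in> monotone_bool_funs k"
  have "f = (\<lambda>v. v \<in> {w. length w = k \<and> f w})"
    using f unfolding monotone_bool_funs_def by (auto simp: fun_eq_iff)
  then show "f \<in> (\<lambda>S v. v \<in> S) ` Pow {w. length w = k}" by blast
qed

lemma mbf_finite: "finite (monotone_bool_funs k)"
  using finite_subset[OF mbf_sub] finite_words by blast

lemma mbf_ge2: "card (monotone_bool_funs k) \<ge> 2"
proof -
  have "{\<lambda>_. False, \<lambda>w. length w = k} \<subseteq> monotone_bool_funs k"
    unfolding monotone_bool_funs_def by auto
  moreover have "(\<lambda>_::bool list. False) \<noteq> (\<lambda>w. length w = k)"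
    by (auto simp: fun_eq_iff intro: exI[of _ "replicate k False"])
  then have "card {\<lambda>_::bool list. False, \<lambda>w. length w = k} = 2" by simp
  ultimately show ?thesis using card_mono[OF mbf_finite] by metis
qed

lemma ResI_card_le_pow: "card (ResI L i) \<le> 2 ^ i"
proof -
  have "ResI L i \<subseteq> (\<lambda>w. deriv w L) ` {w. length w = i}" unfolding ResI_def by blast
  then have "card (ResI L i) \<le> card ((\<lambda>w. deriv w L) ` {w. length w = i})"
    by (intro card_mono finite_imageI finite_words)
  also have "\<dots> \<le> card {w::bool list. length w = i}" by (rule card_image_le[OF finite_words])
  also have "\<dots> = 2 ^ i" by (rule card_words)
  finally show ?thesis .
qed

lemma ResI_finite: "finite (ResI L i)"
proof -
  have "ResI L i \<subseteq> (\<lambda>w. deriv w L) ` {w. length w = i}" unfolding ResI_def by blast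
  then show ?thesis by (rule finite_subset) (rule finite_imageI[OF finite_words])
qed

lemma deriv_len:
  assumes "L \<subseteq> {w. length w = n}" "v \<in> deriv w L"
  shows "length v = n - length w" "length w \<le> n"
  using assms unfolding deriv_def by auto

lemma Res_UN:
  assumes "L \<subseteq> {w. length w = n}"
  shows "Res L = (\<Union>i\<in>{0..n}. ResI L i)"
proof
  show "Res L \<subseteq> (\<Union>i\<in>{0..n}. ResI L i)"
  proof
    fix X assume "X \<in> Res L"
    then obtain w where X: "X = deriv w L" "deriv w L \<noteq> {}" unfolding Res_def by blast
    then have "length w \<le> n" using deriv_len[OF assms] by blast
    moreover have "X \<in> ResI L (length w)" unfolding ResI_def using X by blast
    ultimately show "X \<in> (\<Union>i\<in>{0..n}. ResI L i)" by auto
  qed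
  show "(\<Union>i\<in>{0..n}. ResI L i) \<subseteq> Res L" unfolding ResI_def Res_def by blast
qed

lemma card_Res:
  assumes "L \<subseteq> {w. length w = n}"
  shows "card (Res L) = (\<Sum>i = 0..n. card (ResI L i))" "finite (Res L)"
proof -
  have disj: "ResI L i \<inter> ResI L j = {}" if "i \<in> {0..n}" "j \<in> {0..n}" "i \<noteq> j" for i j
  proof (rule ccontr)
    assume "ResI L i \<inter> ResI L j \<noteq> {}"
    then obtain X where "X \<in> ResI L i" "X \<in> ResI L j" by blast
    then obtain w u where "X = deriv w L" "length w = i" "X \<noteq> {}" "X = deriv u L" "length u = j"
      unfolding ResI_def by blast
    then obtain v where "v \<in> deriv w L" "v \<in> deriv u L" by blast
    then show False using deriv_len[OF assms] that \<open>length w = i\<close> \<open>length u = j\<close>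
      by (metis atLeastAtMost_iff diff_diff_cancel)
  qed
  show "card (Res L) = (\<Sum>i = 0..n. card (ResI L i))"
    unfolding Res_UN[OF assms] by (rule card_UN_disjoint) (auto simp: ResI_finite disj)
  show "finite (Res L)" unfolding Res_UN[OF assms] by (simp add: ResI_finite)
qed

lemma ResI_card_le_mbf:
  assumes M: "monotone_lang n L" and i: "i \<le> n"
  shows "card (ResI L i) \<le> card (monotone_bool_funs (n - i)) - 1"
proof -
  have Ln: "L \<subseteq> {w. length w = n}" using M unfolding monotone_lang_def by blast
  let ?phi = "\<lambda>X v. v \<in> X"
  have "?phi ` ResI L i \<subseteq> monotone_bool_funs (n - i) - {\<lambda>_. False}"
  proof
    fix g assume "g \<in> ?phi ` ResI L i"
    then obtain w where g: "g = ?phi (deriv w L)" and w: "length w = i" "deriv w L \<noteq> {}"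
      unfolding ResI_def by blast
    have "g \<noteq> (\<lambda>_. False)" using g w(2) by (auto simp: fun_eq_iff)
    moreover have "g \<in> monotone_bool_funs (n - i)"
      unfolding monotone_bool_funs_def
    proof (intro CollectI conjI allI impI)
      fix v :: "bool list" assume lv: "length v \<noteq> n - i" show "g v = False"
      proof (rule ccontr)
        assume "g v \<noteq> False"
        then have "v \<in> deriv w L" using g by simp
        then show False using deriv_len(1)[OF Ln, of v w] w lv by simp
      qed
    next
      fix s t :: "bool list" assume st: "length s = n - i \<and> length t = n - i \<and> (\<forall>j<n - i. s ! j \<le> t ! j)"
      show "g s \<le> g t"
      proof (cases "w @ s \<in> L")
        case True
        have "length (w @ t) = n" using st w i by simp
        moreover have "\<forall>j<n. (w @ s) ! j \<le> (w @ t) ! j"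
        proof (intro allI impI)
          fix j assume "j < n"
          show "(w @ s) ! j \<le> (w @ t) ! j"
          proof (cases "j < length w")
            case True then show ?thesis by (simp add: nth_append)
          next
            case False then show ?thesis using st w \<open>j < n\<close> by (simp add: nth_append)
          qed
        qed
        ultimately have "w @ t \<in> L" using M True unfolding monotone_lang_def by blast
        then show ?thesis using g by (simp add: deriv_def)
      next
        case False then show ?thesis using g by (simp add: deriv_def)
      qed
    qed
    ultimately show "g \<in> monotone_bool_funs (n - i) - {\<lambda>_. False}" by blast
  qed
  moreover have "inj_on ?phi (ResI L i)" by (auto simp: inj_on_def fun_eq_iff)
  ultimately have "card (ResI L i) \<le> card (monotone_bool_funs (n - i) - {\<lambda>_. False})"
    by (intro card_inj_on_le) (simp_all add: mbf_finite)
  also have "\<dots> \<le> card (monotone_bool_funs (n - i)) - 1"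
  proof -
    have "(\<lambda>_. False) \<in> monotone_bool_funs (n - i)" by (simp add: monotone_bool_funs_def)
    then show ?thesis by (simp add: card_Diff_singleton mbf_finite)
  qed
  finally show ?thesis .
qed

lemma part1:
  assumes M: "monotone_lang n L"
  shows "min_pdfa_states L \<le> (\<Sum>i = 0..n. min (2 ^ i) (card (monotone_bool_funs (n - i)) - 1))"
proof (cases "L = {}")
  case True
  have "min_pdfa_states L \<le> 1" using True min_states_empty by simp
  also have "1 \<le> min (2 ^ 0) (card (monotone_bool_funs (n - 0)) - 1)"
    using mbf_ge2[of n] by simp
  also have "\<dots> \<le> (\<Sum>i = 0..n. min (2 ^ i) (card (monotone_bool_funs (n - i)) - 1))"
    by (rule member_le_sum) auto
  finally show ?thesis .
next
  case False
  have Ln: "L \<subseteq> {w. length w = n}" using M unfolding monotone_lang_def by blast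
  have "min_pdfa_states L = (\<Sum>i = 0..n. card (ResI L i))"
    using min_states_eq[OF card_Res(2)[OF Ln] False] card_Res(1)[OF Ln] by simp
  also have "\<dots> \<le> (\<Sum>i = 0..n. min (2 ^ i) (card (monotone_bool_funs (n - i)) - 1))"
    using ResI_card_le_pow ResI_card_le_mbf[OF M] by (intro sum_mono) simp
  finally show ?thesis .
qed




datatype bt = Lf bool | Nd bt bt

fun lk :: "bt \<Rightarrow> bool list \<Rightarrow> bool" where
  "lk (Lf b) [] = b"
| "lk (Nd l r) (a # w) = lk (if a then r else l) w"
| "lk _ _ = False"

fun bal :: "nat \<Rightarrow> bt \<Rightarrow> bool" where
  "bal 0 (Lf b) = True"
| "bal (Suc k) (Nd l r) = (bal k l \<and> bal k r)"
| "bal _ _ = False"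

fun leT :: "bt \<Rightarrow> bt \<Rightarrow> bool" where
  "leT (Lf a) (Lf b) = (a \<le> b)"
| "leT (Nd l r) (Nd l' r') = (leT l l' \<and> leT r r')"
| "leT _ _ = False"

fun monoT :: "bt \<Rightarrow> bool" where
  "monoT (Lf b) = True"
| "monoT (Nd l r) = (monoT l \<and> monoT r \<and> leT l r)"

fun hasT :: "bt \<Rightarrow> bool" where
  "hasT (Lf b) = b"
| "hasT (Nd l r) = (hasT l \<or> hasT r)"

fun sub :: "bt \<Rightarrow> bool list \<Rightarrow> bt" where
  "sub t [] = t"
| "sub (Nd l r) (a # w) = sub (if a then r else l) w"
| "sub (Lf b) (a # w) = Lf False"

fun subs :: "nat \<Rightarrow> bt \<Rightarrow> bt list" where
  "subs 0 t = [t]"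
| "subs (Suc i) (Nd l r) = subs i l @ subs i r"
| "subs (Suc i) (Lf b) = []"

fun allT :: "nat \<Rightarrow> bt list" where
  "allT 0 = [Lf False, Lf True]"
| "allT (Suc k) = concat (map (\<lambda>l. map (Nd l) (allT k)) (allT k))"

fun mk :: "nat \<Rightarrow> (bool list \<Rightarrow> bool) \<Rightarrow> bt" where
  "mk 0 f = Lf (f [])"
| "mk (Suc k) f = Nd (mk k (\<lambda>w. f (False # w))) (mk k (\<lambda>w. f (True # w)))"

lemma lk_len: "bal k t \<Longrightarrow> lk t w \<Longrightarrow> length w = k"
  by (induction k t arbitrary: w rule: bal.induct) (auto elim: lk.elims split: if_splits)

lemma all_Suc_le: "(\<forall>j<Suc k. (a # s) ! j \<le> (b # v) ! j) \<longleftrightarrow> a \<le> b \<and> (\<forall>j<k. s ! j \<le> v ! j)"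
  by (auto simp: less_Suc_eq_0_disj)

lemma all_Suc_imp: "(\<forall>j<Suc k. (a # s) ! j \<longrightarrow> (b # v) ! j) \<longleftrightarrow> (a \<longrightarrow> b) \<and> (\<forall>j<k. s ! j \<longrightarrow> v ! j)"
  by (auto simp: less_Suc_eq_0_disj)

lemma leT_iff: "bal k t \<Longrightarrow> bal k u \<Longrightarrow> leT t u \<longleftrightarrow> (\<forall>w. length w = k \<longrightarrow> lk t w \<le> lk u w)"
proof (induction k arbitrary: t u)
  case 0 then show ?case by (cases t; cases u) auto
next
  case (Suc k)
  then obtain l r l' r' where t: "t = Nd l r" and u: "u = Nd l' r'"
    by (cases t; cases u) auto
  have b: "bal k l" "bal k r" "bal k l'" "bal k r'" using Suc.prems t u by auto
  have "(\<forall>w. length w = Suc k \<longrightarrow> lk t w \<le> lk u w) \<longleftrightarrow>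
      (\<forall>w. length w = k \<longrightarrow> lk l w \<le> lk l' w) \<and> (\<forall>w. length w = k \<longrightarrow> lk r w \<le> lk r' w)"
  proof
    assume H: "\<forall>w. length w = Suc k \<longrightarrow> lk t w \<le> lk u w"
    show "(\<forall>w. length w = k \<longrightarrow> lk l w \<le> lk l' w) \<and> (\<forall>w. length w = k \<longrightarrow> lk r w \<le> lk r' w)"
    proof (intro conjI allI impI)
      fix w :: "bool list" assume "length w = k"
      then show "lk l w \<le> lk l' w" using H[rule_format, of "False # w"] t u by simp
    next
      fix w :: "bool list" assume "length w = k"
      then show "lk r w \<le> lk r' w" using H[rule_format, of "True # w"] t u by simp
    qed
  next
    assume H: "(\<forall>w. length w = k \<longrightarrow> lk l w \<le> lk l' w) \<and> (\<forall>w. length w = k \<longrightarrow> lk r w \<le> lk r' w)"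
    show "\<forall>w. length w = Suc k \<longrightarrow> lk t w \<le> lk u w"
    proof (intro allI impI)
      fix w :: "bool list" assume "length w = Suc k"
      then obtain a w' where "w = a # w'" "length w' = k" by (cases w) auto
      then show "lk t w \<le> lk u w" using H t u by (cases a) auto
    qed
  qed
  then show ?case using Suc.IH b t u by simp
qed

lemma monoT_iff: "bal k t \<Longrightarrow> monoT t \<longleftrightarrow>
   (\<forall>s v. length s = k \<and> length v = k \<and> (\<forall>j<k. s ! j \<le> v ! j) \<longrightarrow> lk t s \<le> lk t v)"
proof (induction k arbitrary: t)
  case 0 then show ?case by (cases t) auto
next
  case (Suc k)
  then obtain l r where t: "t = Nd l r" by (cases t) auto
  have b: "bal k l" "bal k r" using Suc.prems t by auto
  let ?M = "\<lambda>t. (\<forall>s v. length s = k \<and> length v = k \<and> (\<forall>j<k. s ! j \<le> v ! j) \<longrightarrow> lk t s \<le> lk t v)"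
  have "(\<forall>s v. length s = Suc k \<and> length v = Suc k \<and> (\<forall>j<Suc k. s ! j \<le> v ! j) \<longrightarrow> lk t s \<le> lk t v)
        \<longleftrightarrow> ?M l \<and> ?M r \<and> (\<forall>w. length w = k \<longrightarrow> lk l w \<le> lk r w)" (is "?A \<longleftrightarrow> ?B")
  proof
    assume H: ?A
    have 1: "?M l"
    proof (intro allI impI)
      fix s v :: "bool list" assume "length s = k \<and> length v = k \<and> (\<forall>j<k. s ! j \<le> v ! j)"
      then show "lk l s \<le> lk l v" using H[rule_format, of "False # s" "False # v"] t
        by (simp add: all_Suc_imp)
    qed
    have 2: "?M r"
    proof (intro allI impI)
      fix s v :: "bool list" assume "length s = k \<and> length v = k \<and> (\<forall>j<k. s ! j \<le> v ! j)"
      then show "lk r s \<le> lk r v" using H[rule_format, of "True # s" "True # v"] t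
        by (simp add: all_Suc_imp)
    qed
    have 3: "\<forall>w. length w = k \<longrightarrow> lk l w \<le> lk r w"
    proof (intro allI impI)
      fix w :: "bool list" assume "length w = k"
      then show "lk l w \<le> lk r w" using H[rule_format, of "False # w" "True # w"] t
        by (simp add: all_Suc_imp)
    qed
    show ?B using 1 2 3 by blast
  next
    assume H: ?B
    show ?A
    proof (intro allI impI)
      fix s v :: "bool list"
      assume sv: "length s = Suc k \<and> length v = Suc k \<and> (\<forall>j<Suc k. s ! j \<le> v ! j)"
      then obtain a s' b v' where sv': "s = a # s'" "v = b # v'" by (cases s; cases v) auto
      have ab: "a \<le> b" and len: "length s' = k" "length v' = k" and le: "\<forall>j<k. s' ! j \<le> v' ! j"
        using sv unfolding sv' all_Suc_le by auto
      show "lk t s \<le> lk t v"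
      proof (cases a)
        case True
        then have "b" using ab by simp
        then show ?thesis using True H len le t sv' by auto
      next
        case False
        show ?thesis
        proof (cases b)
          case True
          have "lk l s' \<le> lk l v'" using H len le by blast
          moreover have "lk l v' \<le> lk r v'" using H len by blast
          ultimately show ?thesis using False True t sv' by auto
        next
          case b: False
          then show ?thesis using False H len le t sv' by auto
        qed
      qed
    qed
  qed
  then show ?case using Suc.IH b t leT_iff[OF b] by simp
qed

lemma lk_sub: "lk t (w @ v) = lk (sub t w) v"
proof (induction t w rule: sub.induct)
  case (3 b a w) then show ?case by (cases v) auto
qed auto

lemma bal_sub: "bal k t \<Longrightarrow> length w \<le> k \<Longrightarrow> bal (k - length w) (sub t w)"
proof (induction t w arbitrary: k rule: sub.induct)
  case (2 l r a w)
  then obtain k' where "k = Suc k'" by (cases k) auto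
  then show ?case using 2 by auto
next
  case (3 b a w) then show ?case by (cases k) auto
qed auto

lemma set_subs: "bal k t \<Longrightarrow> i \<le> k \<Longrightarrow> set (subs i t) = {sub t w | w. length w = i}"
proof (induction i arbitrary: k t)
  case 0 then show ?case by auto
next
  case (Suc i)
  then obtain k' l r where k: "k = Suc k'" and t: "t = Nd l r" by (cases k; cases t) auto
  have b: "bal k' l" "bal k' r" "i \<le> k'" using Suc.prems k t by auto
  have "{sub t w | w. length w = Suc i} =
        {sub l w | w. length w = i} \<union> {sub r w | w. length w = i}"
  proof (intro set_eqI iffI)
    fix x assume "x \<in> {sub t w | w. length w = Suc i}"
    then obtain w where "x = sub t w" "length w = Suc i" by blast
    then obtain a w' where "w = a # w'" "length w' = i" by (cases w) auto
    then show "x \<in> {sub l w | w. length w = i} \<union> {sub r w | w. length w = i}"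
      using \<open>x = sub t w\<close> t by (cases a) auto
  next
    fix x assume "x \<in> {sub l w | w. length w = i} \<union> {sub r w | w. length w = i}"
    then show "x \<in> {sub t w | w. length w = Suc i}"
    proof
      assume "x \<in> {sub l w | w. length w = i}"
      then obtain w where "x = sub l w" "length w = i" by blast
      then show ?thesis using t by (intro CollectI exI[of _ "False # w"]) auto
    next
      assume "x \<in> {sub r w | w. length w = i}"
      then obtain w where "x = sub r w" "length w = i" by blast
      then show ?thesis using t by (intro CollectI exI[of _ "True # w"]) auto
    qed
  qed
  then show ?case using Suc.IH[OF b(1) b(3)] Suc.IH[OF b(2) b(3)] t by simp
qed

lemma lk_inj: "bal k t \<Longrightarrow> bal k u \<Longrightarrow> (\<forall>w. lk t w = lk u w) \<Longrightarrow> t = u"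
proof (induction k arbitrary: t u)
  case 0 then show ?case by (cases t; cases u) (auto dest: spec[of _ "[]"])
next
  case (Suc k)
  then obtain l r l' r' where t: "t = Nd l r" and u: "u = Nd l' r'"
    by (cases t; cases u) auto
  have "\<forall>w. lk l w = lk l' w" using Suc.prems(3) t u by (auto dest: spec[of _ "False # w" for w])
  moreover have "\<forall>w. lk r w = lk r' w" using Suc.prems(3) t u by (auto dest: spec[of _ "True # w" for w])
  ultimately show ?case using Suc t u by auto
qed

lemma hasT_iff: "hasT t \<longleftrightarrow> (\<exists>w. lk t w)"
proof (induction t)
  case (Lf b) then show ?case by (auto elim: lk.elims intro: exI[of _ "[]"])
next
  case (Nd l r)
  show ?case
  proof
    assume "hasT (Nd l r)"
    then show "\<exists>w. lk (Nd l r) w" using Nd by (auto intro: exI[of _ "False # w" for w] exI[of _ "True # w" for w])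
  next
    assume "\<exists>w. lk (Nd l r) w"
    then obtain w where "lk (Nd l r) w" by blast
    then show "hasT (Nd l r)" using Nd by (cases w) (auto split: if_splits)
  qed
qed

lemma lk_mk: "(\<forall>w. length w \<noteq> k \<longrightarrow> f w = False) \<Longrightarrow> lk (mk k f) w = f w"
proof (induction k arbitrary: f w)
  case 0 then show ?case by (cases w) auto
next
  case (Suc k)
  show ?case
  proof (cases w)
    case Nil then show ?thesis using Suc.prems by auto
  next
    case (Cons a w')
    then show ?thesis using Suc.IH[of "\<lambda>w. f (a # w)" w'] Suc.prems by (cases a) auto
  qed
qed

lemma bal_mk: "bal k (mk k f)"
  by (induction k arbitrary: f) auto

lemma bal_allT: "bal k t \<Longrightarrow> t \<in> set (allT k)"
  by (induction k t rule: bal.induct) auto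

lemma card_mbf_le: "card (monotone_bool_funs k) \<le> length (filter monoT (allT k))"
proof -
  have "monotone_bool_funs k \<subseteq> lk ` set (filter monoT (allT k))"
  proof
    fix f assume f: "f \<in> monotone_bool_funs k"
    have z: "\<forall>w. length w \<noteq> k \<longrightarrow> f w = False" using f unfolding monotone_bool_funs_def by blast
    have e: "lk (mk k f) = f" using lk_mk[OF z] by (simp add: fun_eq_iff)
    have "monoT (mk k f)" unfolding monoT_iff[OF bal_mk] e using f unfolding monotone_bool_funs_def by blast
    then have "mk k f \<in> set (filter monoT (allT k))" using bal_allT[OF bal_mk] by simp
    then show "f \<in> lk ` set (filter monoT (allT k))" using e by force
  qed
  then have "card (monotone_bool_funs k) \<le> card (lk ` set (filter monoT (allT k)))"
    by (intro card_mono) auto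
  also have "\<dots> \<le> card (set (filter monoT (allT k)))" by (rule card_image_le) simp
  also have "\<dots> \<le> length (filter monoT (allT k))" by (rule card_length)
  finally show ?thesis .
qed

lemma D_vals: "length (filter monoT (allT 0)) = 2" "length (filter monoT (allT 1)) = 3"
  "length (filter monoT (allT 2)) = 6" "length (filter monoT (allT 3)) = 20"
  by code_simp+




definition W0 :: bt where "W0 = (Lf True)"

definition W1 :: bt where "W1 = (Nd (Lf True) (Lf True))"

definition W2 :: bt where "W2 = (Nd (Nd (Lf False) (Lf True)) (Nd (Lf True) (Lf True)))"

definition W3 :: bt where "W3 = (Nd (Nd (Nd (Lf False) (Lf True)) (Nd (Lf False) (Lf True))) (Nd (Nd (Lf True) (Lf True)) (Nd (Lf True) (Lf True))))"

definition W4 :: bt where "W4 = (Nd (Nd (Nd (Nd (Lf False) (Lf False)) (Nd (Lf False) (Lf True))) (Nd (Nd (Lf False) (Lf True)) (Nd (Lf True) (Lf True)))) (Nd (Nd (Nd (Lf False) (Lf True)) (Nd (Lf False) (Lf True))) (Nd (Nd (Lf True) (Lf True)) (Nd (Lf True) (Lf True)))))"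

definition W5 :: bt where "W5 = (Nd (Nd (Nd (Nd (Nd (Lf False) (Lf False)) (Nd (Lf False) (Lf False))) (Nd (Nd (Lf False) (Lf False)) (Nd (Lf True) (Lf True)))) (Nd (Nd (Nd (Lf False) (Lf False)) (Nd (Lf False) (Lf True))) (Nd (Nd (Lf False) (Lf False)) (Nd (Lf True) (Lf True))))) (Nd (Nd (Nd (Nd (Lf False) (Lf False)) (Nd (Lf False) (Lf False))) (Nd (Nd (Lf False) (Lf True)) (Nd (Lf True) (Lf True)))) (Nd (Nd (Nd (Lf False) (Lf True)) (Nd (Lf False) (Lf True))) (Nd (Nd (Lf True) (Lf True)) (Nd (Lf True) (Lf True))))))"

definition W6 :: bt where "W6 = (Nd (Nd (Nd (Nd (Nd (Nd (Lf False) (Lf False)) (Nd (Lf False) (Lf False))) (Nd (Nd (Lf False) (Lf False)) (Nd (Lf False) (Lf True)))) (Nd (Nd (Nd (Lf False) (Lf False)) (Nd (Lf False) (Lf False))) (Nd (Nd (Lf False) (Lf True)) (Nd (Lf False) (Lf True))))) (Nd (Nd (Nd (Nd (Lf False) (Lf False)) (Nd (Lf False) (Lf False))) (Nd (Nd (Lf False) (Lf False)) (Nd (Lf True) (Lf True)))) (Nd (Nd (Nd (Lf False) (Lf False)) (Nd (Lf False) (Lf False))) (Nd (Nd (Lf True) (Lf True)) (Nd (Lf True) (Lf True)))))) (Nd (Nd (Nd (Nd (Nd (Lf False) (Lf False)) (Nd (Lf False) (Lf False))) (Nd (Nd (Lf False) (Lf True)) (Nd (Lf True) (Lf True)))) (Nd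 (Nd (Nd (Lf False) (Lf False)) (Nd (Lf True) (Lf True))) (Nd (Nd (Lf False) (Lf True)) (Nd (Lf True) (Lf True))))) (Nd (Nd (Nd (Nd (Lf False) (Lf False)) (Nd (Lf False) (Lf True))) (Nd (Nd (Lf True) (Lf True)) (Nd (Lf True) (Lf True)))) (Nd (Nd (Nd (Lf False) (Lf False)) (Nd (Lf True) (Lf True))) (Nd (Nd (Lf True) (Lf True)) (Nd (Lf True) (Lf True)))))))"

definition W7 :: bt where "W7 = (Nd (Nd (Nd (Nd (Nd (Nd (Nd (Lf False) (Lf False)) (Nd (Lf False) (Lf False))) (Nd (Nd (Lf False) (Lf False)) (Nd (Lf False) (Lf True)))) (Nd (Nd (Nd (Lf False) (Lf False)) (Nd (Lf False) (Lf True))) (Nd (Nd (Lf False) (Lf False)) (Nd (Lf False) (Lf True))))) (Nd (Nd (Nd (Nd (Lf False) (Lf False)) (Nd (Lf False) (Lf False))) (Nd (Nd (Lf False) (Lf True)) (Nd (Lf False) (Lf True)))) (Nd (Nd (Nd (Lf False) (Lf False)) (Nd (Lf False) (Lf True))) (Nd (Nd (Lf False) (Lf True)) (Nd (Lf True) (Lf True)))))) (Nd (Nd (Nd (Nd (Nd (Lf False) (Lf False)) (Nd (Lf False) (Lf False))) (Nd (Nd (Lf False) (Lf False)) (Nd (Lf True) (Lf True)))) (Nd (Nd (Nd (Lf False) (Lf False)) (Nd (Lf False) (Lf True))) (Nd (Nd (Lf False) (Lf False)) (Nd (Lf True) (Lf True))))) (Nd (Nd (Nd (Nd (Lf False) (Lf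 False)) (Nd (Lf False) (Lf False))) (Nd (Nd (Lf False) (Lf True)) (Nd (Lf True) (Lf True)))) (Nd (Nd (Nd (Lf False) (Lf False)) (Nd (Lf True) (Lf True))) (Nd (Nd (Lf True) (Lf True)) (Nd (Lf True) (Lf True))))))) (Nd (Nd (Nd (Nd (Nd (Nd (Lf False) (Lf False)) (Nd (Lf False) (Lf True))) (Nd (Nd (Lf False) (Lf True)) (Nd (Lf False) (Lf True)))) (Nd (Nd (Nd (Lf False) (Lf False)) (Nd (Lf False) (Lf True))) (Nd (Nd (Lf True) (Lf True)) (Nd (Lf True) (Lf True))))) (Nd (Nd (Nd (Nd (Lf False) (Lf False)) (Nd (Lf True) (Lf True))) (Nd (Nd (Lf False) (Lf True)) (Nd (Lf True) (Lf True)))) (Nd (Nd (Nd (Lf False) (Lf True)) (Nd (Lf True) (Lf True))) (Nd (Nd (Lf True) (Lf True)) (Nd (Lf True) (Lf True)))))) (Nd (Nd (Nd (Nd (Nd (Lf False) (Lf True)) (Nd (Lf False) (Lf True))) (Nd (Nd (Lf False) (Lf True)) (Nd (Lf True) (Lf True)))) (Nd (Nd (Nd (Lf False) (Lf True)) (Nd (Lf False) (Lf True))) (Nd (Nd (Lf True) (Lf True)) (Nd (Lf True) (Lf True))))) (Nd (Nd (Nd (Nd (Lf False) (Lf True)) (Nd (Lf True) (Lf True))) (Nd (Nd (Lf False) (Lf True)) (Nd (Lf True) (Lf True)))) (Nd (Nd (Nd (Lf True) (Lf True)) (Nd (Lf True) (Lf True))) (Nd (Nd (Lf True) (Lf True))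 (Nd (Lf True) (Lf True))))))))"

definition W8 :: bt where "W8 = (Nd (Nd (Nd (Nd (Nd (Nd (Nd (Nd (Lf False) (Lf False)) (Nd (Lf False) (Lf False))) (Nd (Nd (Lf False) (Lf False)) (Nd (Lf False) (Lf False)))) (Nd (Nd (Nd (Lf False) (Lf False)) (Nd (Lf False) (Lf False))) (Nd (Nd (Lf False) (Lf False)) (Nd (Lf False) (Lf True))))) (Nd (Nd (Nd (Nd (Lf False) (Lf False)) (Nd (Lf False) (Lf False))) (Nd (Nd (Lf False) (Lf False)) (Nd (Lf False) (Lf False)))) (Nd (Nd (Nd (Lf False) (Lf True)) (Nd (Lf False) (Lf True))) (Nd (Nd (Lf False) (Lf True)) (Nd (Lf False) (Lf True)))))) (Nd (Nd (Nd (Nd (Nd (Lf False) (Lf False)) (Nd (Lf False) (Lf False))) (Nd (Nd (Lf False) (Lf False)) (Nd (Lf False) (Lf False)))) (Nd (Nd (Nd (Lf False) (Lf False)) (Nd (Lf False) (Lf True))) (Nd (Nd (Lf False) (Lf False)) (Nd (Lf True) (Lf True))))) (Nd (Nd (Nd (Nd (Lf False) (Lf False)) (Nd (Lf False) (Lf False))) (Nd (Nd (Lf False) (Lf True)) (Nd (Lf False) (Lf True)))) (Nd (Nd (Nd (Lf False) (Lf True)) (Nd (Lf False) (Lf True))) (Nd (Nd (Lf True) (Lf True)) (Nd (Lf True) (Lf True))))))) (Nd (Nd (Nd (Nd (Nd (Nd (Lf False) (Lf False)) (Nd (Lf False) (Lf False))) (Nd (Nd (Lf False) (Lf False)) (Nd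 (Lf False) (Lf False)))) (Nd (Nd (Nd (Lf False) (Lf False)) (Nd (Lf False) (Lf False))) (Nd (Nd (Lf False) (Lf False)) (Nd (Lf True) (Lf True))))) (Nd (Nd (Nd (Nd (Lf False) (Lf False)) (Nd (Lf False) (Lf True))) (Nd (Nd (Lf False) (Lf False)) (Nd (Lf False) (Lf True)))) (Nd (Nd (Nd (Lf False) (Lf True)) (Nd (Lf False) (Lf True))) (Nd (Nd (Lf True) (Lf True)) (Nd (Lf True) (Lf True)))))) (Nd (Nd (Nd (Nd (Nd (Lf False) (Lf False)) (Nd (Lf False) (Lf False))) (Nd (Nd (Lf False) (Lf False)) (Nd (Lf False) (Lf True)))) (Nd (Nd (Nd (Lf False) (Lf False)) (Nd (Lf True) (Lf True))) (Nd (Nd (Lf False) (Lf False)) (Nd (Lf True) (Lf True))))) (Nd (Nd (Nd (Nd (Lf False) (Lf False)) (Nd (Lf False) (Lf True))) (Nd (Nd (Lf False) (Lf True)) (Nd (Lf False) (Lf True)))) (Nd (Nd (Nd (Lf False) (Lf True)) (Nd (Lf True) (Lf True))) (Nd (Nd (Lf True) (Lf True)) (Nd (Lf True) (Lf True)))))))) (Nd (Nd (Nd (Nd (Nd (Nd (Nd (Lf False) (Lf False)) (Nd (Lf False) (Lf False))) (Nd (Nd (Lf False) (Lf False)) (Nd (Lf False) (Lf True)))) (Nd (Nd (Nd (Lf False) (Lf False)) (Nd (Lf False) (Lf False))) (Nd (Nd (Lf False) (Lf True)) (Nd (Lf False) (Lf True))))) (Nd (Nd (Nd (Nd (Lf False)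 (Lf False)) (Nd (Lf False) (Lf True))) (Nd (Nd (Lf False) (Lf True)) (Nd (Lf True) (Lf True)))) (Nd (Nd (Nd (Lf False) (Lf True)) (Nd (Lf True) (Lf True))) (Nd (Nd (Lf False) (Lf True)) (Nd (Lf True) (Lf True)))))) (Nd (Nd (Nd (Nd (Nd (Lf False) (Lf False)) (Nd (Lf False) (Lf False))) (Nd (Nd (Lf False) (Lf False)) (Nd (Lf True) (Lf True)))) (Nd (Nd (Nd (Lf False) (Lf False)) (Nd (Lf True) (Lf True))) (Nd (Nd (Lf False) (Lf True)) (Nd (Lf True) (Lf True))))) (Nd (Nd (Nd (Nd (Lf False) (Lf True)) (Nd (Lf False) (Lf True))) (Nd (Nd (Lf False) (Lf True)) (Nd (Lf True) (Lf True)))) (Nd (Nd (Nd (Lf False) (Lf True)) (Nd (Lf True) (Lf True))) (Nd (Nd (Lf True) (Lf True)) (Nd (Lf True) (Lf True))))))) (Nd (Nd (Nd (Nd (Nd (Nd (Lf False) (Lf False)) (Nd (Lf False) (Lf False))) (Nd (Nd (Lf False) (Lf True)) (Nd (Lf True) (Lf True)))) (Nd (Nd (Nd (Lf False) (Lf False)) (Nd (Lf False) (Lf False))) (Nd (Nd (Lf True) (Lf True)) (Nd (Lf True) (Lf True))))) (Nd (Nd (Nd (Nd (Lf False) (Lf True)) (Nd (Lf True) (Lf True))) (Nd (Nd (Lf False) (Lf True)) (Nd (Lf True) (Lf True)))) (Nd (Nd (Nd (Lf False) (Lf True)) (Nd (Lf True) (Lf True))) (Nd (Nd (Lf True) (Lf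 True)) (Nd (Lf True) (Lf True)))))) (Nd (Nd (Nd (Nd (Nd (Lf False) (Lf False)) (Nd (Lf False) (Lf True))) (Nd (Nd (Lf True) (Lf True)) (Nd (Lf True) (Lf True)))) (Nd (Nd (Nd (Lf False) (Lf False)) (Nd (Lf True) (Lf True))) (Nd (Nd (Lf True) (Lf True)) (Nd (Lf True) (Lf True))))) (Nd (Nd (Nd (Nd (Lf True) (Lf True)) (Nd (Lf True) (Lf True))) (Nd (Nd (Lf True) (Lf True)) (Nd (Lf True) (Lf True)))) (Nd (Nd (Nd (Lf True) (Lf True)) (Nd (Lf True) (Lf True))) (Nd (Nd (Lf True) (Lf True)) (Nd (Lf True) (Lf True)))))))))"

definition W9 :: bt where "W9 = (Nd (Nd (Nd (Nd (Nd (Nd (Nd (Nd (Nd (Lf False) (Lf False)) (Nd (Lf False) (Lf False))) (Nd (Nd (Lf False) (Lf False)) (Nd (Lf False) (Lf True)))) (Nd (Nd (Nd (Lf False) (Lf False)) (Nd (Lf False) (Lf False))) (Nd (Nd (Lf False) (Lf False)) (Nd (Lf False) (Lf True))))) (Nd (Nd (Nd (Nd (Lf False) (Lf False)) (Nd (Lf False) (Lf False))) (Nd (Nd (Lf False) (Lf False)) (Nd (Lf False) (Lf True)))) (Nd (Nd (Nd (Lf False) (Lf False)) (Nd (Lf False) (Lf False))) (Nd (Nd (Lf False) (Lf False)) (Nd (Lf True) (Lf True)))))) (Nd (Nd (Nd (Nd (Nd (Lf False) (Lf False)) (Nd (Lf False) (Lf False))) (Nd (Nd (Lf False) (Lf False))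 (Nd (Lf False) (Lf True)))) (Nd (Nd (Nd (Lf False) (Lf False)) (Nd (Lf False) (Lf False))) (Nd (Nd (Lf False) (Lf True)) (Nd (Lf False) (Lf True))))) (Nd (Nd (Nd (Nd (Lf False) (Lf False)) (Nd (Lf False) (Lf False))) (Nd (Nd (Lf False) (Lf True)) (Nd (Lf False) (Lf True)))) (Nd (Nd (Nd (Lf False) (Lf False)) (Nd (Lf False) (Lf False))) (Nd (Nd (Lf False) (Lf True)) (Nd (Lf True) (Lf True))))))) (Nd (Nd (Nd (Nd (Nd (Nd (Lf False) (Lf False)) (Nd (Lf False) (Lf False))) (Nd (Nd (Lf False) (Lf False)) (Nd (Lf False) (Lf True)))) (Nd (Nd (Nd (Lf False) (Lf False)) (Nd (Lf False) (Lf True))) (Nd (Nd (Lf False) (Lf False)) (Nd (Lf False) (Lf True))))) (Nd (Nd (Nd (Nd (Lf False) (Lf False)) (Nd (Lf False) (Lf False))) (Nd (Nd (Lf False) (Lf False)) (Nd (Lf True) (Lf True)))) (Nd (Nd (Nd (Lf False) (Lf False)) (Nd (Lf False) (Lf True))) (Nd (Nd (Lf False) (Lf False)) (Nd (Lf True) (Lf True)))))) (Nd (Nd (Nd (Nd (Nd (Lf False) (Lf False)) (Nd (Lf False) (Lf True))) (Nd (Nd (Lf False) (Lf False)) (Nd (Lf False) (Lf True)))) (Nd (Nd (Nd (Lf False) (Lf False)) (Nd (Lf False) (Lf True))) (Nd (Nd (Lf False) (Lf True)) (Nd (Lf False) (Lf True))))) (Nd (Nd (Nd (Nd (Lf False)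 (Lf False)) (Nd (Lf False) (Lf True))) (Nd (Nd (Lf False) (Lf True)) (Nd (Lf True) (Lf True)))) (Nd (Nd (Nd (Lf False) (Lf False)) (Nd (Lf True) (Lf True))) (Nd (Nd (Lf False) (Lf True)) (Nd (Lf True) (Lf True)))))))) (Nd (Nd (Nd (Nd (Nd (Nd (Nd (Lf False) (Lf False)) (Nd (Lf False) (Lf False))) (Nd (Nd (Lf False) (Lf False)) (Nd (Lf True) (Lf True)))) (Nd (Nd (Nd (Lf False) (Lf False)) (Nd (Lf False) (Lf False))) (Nd (Nd (Lf False) (Lf False)) (Nd (Lf True) (Lf True))))) (Nd (Nd (Nd (Nd (Lf False) (Lf False)) (Nd (Lf False) (Lf False))) (Nd (Nd (Lf False) (Lf False)) (Nd (Lf True) (Lf True)))) (Nd (Nd (Nd (Lf False) (Lf False)) (Nd (Lf True) (Lf True))) (Nd (Nd (Lf False) (Lf False)) (Nd (Lf True) (Lf True)))))) (Nd (Nd (Nd (Nd (Nd (Lf False) (Lf False)) (Nd (Lf False) (Lf False))) (Nd (Nd (Lf False) (Lf False)) (Nd (Lf True) (Lf True)))) (Nd (Nd (Nd (Lf False) (Lf False)) (Nd (Lf False) (Lf True))) (Nd (Nd (Lf False) (Lf True)) (Nd (Lf True) (Lf True))))) (Nd (Nd (Nd (Nd (Lf False) (Lf False)) (Nd (Lf False) (Lf False))) (Nd (Nd (Lf False) (Lf True)) (Nd (Lf True) (Lf True)))) (Nd (Nd (Nd (Lf False) (Lf False)) (Nd (Lf True) (Lf True))) (Nd (Nd (Lf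 True) (Lf True)) (Nd (Lf True) (Lf True))))))) (Nd (Nd (Nd (Nd (Nd (Nd (Lf False) (Lf False)) (Nd (Lf False) (Lf False))) (Nd (Nd (Lf False) (Lf False)) (Nd (Lf True) (Lf True)))) (Nd (Nd (Nd (Lf False) (Lf True)) (Nd (Lf False) (Lf True))) (Nd (Nd (Lf False) (Lf True)) (Nd (Lf True) (Lf True))))) (Nd (Nd (Nd (Nd (Lf False) (Lf False)) (Nd (Lf False) (Lf False))) (Nd (Nd (Lf False) (Lf True)) (Nd (Lf True) (Lf True)))) (Nd (Nd (Nd (Lf False) (Lf True)) (Nd (Lf True) (Lf True))) (Nd (Nd (Lf False) (Lf True)) (Nd (Lf True) (Lf True)))))) (Nd (Nd (Nd (Nd (Nd (Lf False) (Lf False)) (Nd (Lf False) (Lf True))) (Nd (Nd (Lf False) (Lf True)) (Nd (Lf True) (Lf True)))) (Nd (Nd (Nd (Lf False) (Lf True)) (Nd (Lf False) (Lf True))) (Nd (Nd (Lf False) (Lf True)) (Nd (Lf True) (Lf True))))) (Nd (Nd (Nd (Nd (Lf False) (Lf False)) (Nd (Lf False) (Lf True))) (Nd (Nd (Lf True) (Lf True)) (Nd (Lf True) (Lf True)))) (Nd (Nd (Nd (Lf False) (Lf True)) (Nd (Lf True) (Lf True))) (Nd (Nd (Lf True) (Lf True)) (Nd (Lf True) (Lf True))))))))) (Nd (Nd (Nd (Nd (Nd (Nd (Nd (Nd (Lf False) (Lf False)) (Nd (Lf False) (Lf False))) (Nd (Nd (Lf False) (Lf True)) (Nd (Lf False)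 (Lf True)))) (Nd (Nd (Nd (Lf False) (Lf False)) (Nd (Lf False) (Lf False))) (Nd (Nd (Lf False) (Lf True)) (Nd (Lf False) (Lf True))))) (Nd (Nd (Nd (Nd (Lf False) (Lf False)) (Nd (Lf False) (Lf False))) (Nd (Nd (Lf False) (Lf True)) (Nd (Lf True) (Lf True)))) (Nd (Nd (Nd (Lf False) (Lf False)) (Nd (Lf False) (Lf False))) (Nd (Nd (Lf False) (Lf True)) (Nd (Lf True) (Lf True)))))) (Nd (Nd (Nd (Nd (Nd (Lf False) (Lf False)) (Nd (Lf False) (Lf False))) (Nd (Nd (Lf False) (Lf True)) (Nd (Lf False) (Lf True)))) (Nd (Nd (Nd (Lf False) (Lf True)) (Nd (Lf False) (Lf True))) (Nd (Nd (Lf False) (Lf True)) (Nd (Lf False) (Lf True))))) (Nd (Nd (Nd (Nd (Lf False) (Lf False)) (Nd (Lf False) (Lf False))) (Nd (Nd (Lf False) (Lf True)) (Nd (Lf True) (Lf True)))) (Nd (Nd (Nd (Lf False) (Lf True)) (Nd (Lf False) (Lf True))) (Nd (Nd (Lf False) (Lf True)) (Nd (Lf True) (Lf True))))))) (Nd (Nd (Nd (Nd (Nd (Nd (Lf False) (Lf False)) (Nd (Lf False) (Lf False))) (Nd (Nd (Lf False) (Lf True)) (Nd (Lf False) (Lf True)))) (Nd (Nd (Nd (Lf False) (Lf False)) (Nd (Lf False) (Lf True))) (Nd (Nd (Lf False) (Lf True)) (Nd (Lf False) (Lf True))))) (Nd (Nd (Nd (Nd (Lf False) (Lf False)) (Nd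 (Lf False) (Lf False))) (Nd (Nd (Lf False) (Lf True)) (Nd (Lf True) (Lf True)))) (Nd (Nd (Nd (Lf False) (Lf False)) (Nd (Lf False) (Lf True))) (Nd (Nd (Lf False) (Lf True)) (Nd (Lf True) (Lf True)))))) (Nd (Nd (Nd (Nd (Nd (Lf False) (Lf False)) (Nd (Lf False) (Lf True))) (Nd (Nd (Lf False) (Lf True)) (Nd (Lf False) (Lf True)))) (Nd (Nd (Nd (Lf False) (Lf True)) (Nd (Lf False) (Lf True))) (Nd (Nd (Lf False) (Lf True)) (Nd (Lf False) (Lf True))))) (Nd (Nd (Nd (Nd (Lf False) (Lf False)) (Nd (Lf True) (Lf True))) (Nd (Nd (Lf False) (Lf True)) (Nd (Lf True) (Lf True)))) (Nd (Nd (Nd (Lf False) (Lf True)) (Nd (Lf True) (Lf True))) (Nd (Nd (Lf False) (Lf True)) (Nd (Lf True) (Lf True)))))))) (Nd (Nd (Nd (Nd (Nd (Nd (Nd (Lf False) (Lf False)) (Nd (Lf False) (Lf False))) (Nd (Nd (Lf False) (Lf True)) (Nd (Lf True) (Lf True)))) (Nd (Nd (Nd (Lf False) (Lf False)) (Nd (Lf False) (Lf False))) (Nd (Nd (Lf True) (Lf True)) (Nd (Lf True) (Lf True))))) (Nd (Nd (Nd (Nd (Lf False) (Lf False)) (Nd (Lf False) (Lf True))) (Nd (Nd (Lf False) (Lf True)) (Nd (Lf True) (Lf True)))) (Nd (Nd (Nd (Lf False) (Lf False)) (Nd (Lf True) (Lf True))) (Nd (Nd (Lf True) (Lf True)) (Nd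 (Lf True) (Lf True)))))) (Nd (Nd (Nd (Nd (Nd (Lf False) (Lf False)) (Nd (Lf False) (Lf False))) (Nd (Nd (Lf False) (Lf True)) (Nd (Lf True) (Lf True)))) (Nd (Nd (Nd (Lf False) (Lf True)) (Nd (Lf True) (Lf True))) (Nd (Nd (Lf True) (Lf True)) (Nd (Lf True) (Lf True))))) (Nd (Nd (Nd (Nd (Lf False) (Lf False)) (Nd (Lf True) (Lf True))) (Nd (Nd (Lf False) (Lf True)) (Nd (Lf True) (Lf True)))) (Nd (Nd (Nd (Lf False) (Lf True)) (Nd (Lf True) (Lf True))) (Nd (Nd (Lf True) (Lf True)) (Nd (Lf True) (Lf True))))))) (Nd (Nd (Nd (Nd (Nd (Nd (Lf False) (Lf False)) (Nd (Lf False) (Lf False))) (Nd (Nd (Lf False) (Lf True)) (Nd (Lf True) (Lf True)))) (Nd (Nd (Nd (Lf False) (Lf True)) (Nd (Lf False) (Lf True))) (Nd (Nd (Lf True) (Lf True)) (Nd (Lf True) (Lf True))))) (Nd (Nd (Nd (Nd (Lf False) (Lf False)) (Nd (Lf False) (Lf True))) (Nd (Nd (Lf False) (Lf True)) (Nd (Lf True) (Lf True)))) (Nd (Nd (Nd (Lf False) (Lf True)) (Nd (Lf True) (Lf True))) (Nd (Nd (Lf True) (Lf True)) (Nd (Lf True) (Lf True)))))) (Nd (Nd (Nd (Nd (Nd (Lf False) (Lf False)) (Nd (Lf False) (Lf True))) (Nd (Nd (Lf False) (Lf True)) (Nd (Lf True) (Lf True)))) (Nd (Nd (Nd (Lf True)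 (Lf True)) (Nd (Lf True) (Lf True))) (Nd (Nd (Lf True) (Lf True)) (Nd (Lf True) (Lf True))))) (Nd (Nd (Nd (Nd (Lf False) (Lf False)) (Nd (Lf True) (Lf True))) (Nd (Nd (Lf True) (Lf True)) (Nd (Lf True) (Lf True)))) (Nd (Nd (Nd (Lf True) (Lf True)) (Nd (Lf True) (Lf True))) (Nd (Nd (Lf True) (Lf True)) (Nd (Lf True) (Lf True))))))))))"

definition W10 :: bt where "W10 = (Nd (Nd (Nd (Nd (Nd (Nd (Nd (Nd (Nd (Nd (Lf False) (Lf False)) (Nd (Lf False) (Lf False))) (Nd (Nd (Lf False) (Lf False)) (Nd (Lf False) (Lf False)))) (Nd (Nd (Nd (Lf False) (Lf False)) (Nd (Lf False) (Lf False))) (Nd (Nd (Lf False) (Lf False)) (Nd (Lf False) (Lf True))))) (Nd (Nd (Nd (Nd (Lf False) (Lf False)) (Nd (Lf False) (Lf False))) (Nd (Nd (Lf False) (Lf False)) (Nd (Lf False) (Lf False)))) (Nd (Nd (Nd (Lf False) (Lf False)) (Nd (Lf False) (Lf False))) (Nd (Nd (Lf False) (Lf True)) (Nd (Lf False) (Lf True)))))) (Nd (Nd (Nd (Nd (Nd (Lf False) (Lf False)) (Nd (Lf False) (Lf False))) (Nd (Nd (Lf False) (Lf False)) (Nd (Lf False) (Lf False)))) (Nd (Nd (Nd (Lf False) (Lf False)) (Nd (Lf False) (Lf False))) (Nd (Nd (Lf False) (Lf False)) (Nd (Lf True) (Lf True))))) (Nd (Nd (Nd (Nd (Lf False) (Lf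 False)) (Nd (Lf False) (Lf False))) (Nd (Nd (Lf False) (Lf False)) (Nd (Lf False) (Lf False)))) (Nd (Nd (Nd (Lf False) (Lf False)) (Nd (Lf False) (Lf False))) (Nd (Nd (Lf False) (Lf True)) (Nd (Lf True) (Lf True))))))) (Nd (Nd (Nd (Nd (Nd (Nd (Lf False) (Lf False)) (Nd (Lf False) (Lf False))) (Nd (Nd (Lf False) (Lf False)) (Nd (Lf False) (Lf True)))) (Nd (Nd (Nd (Lf False) (Lf False)) (Nd (Lf False) (Lf False))) (Nd (Nd (Lf False) (Lf False)) (Nd (Lf True) (Lf True))))) (Nd (Nd (Nd (Nd (Lf False) (Lf False)) (Nd (Lf False) (Lf False))) (Nd (Nd (Lf False) (Lf False)) (Nd (Lf False) (Lf True)))) (Nd (Nd (Nd (Lf False) (Lf False)) (Nd (Lf False) (Lf False))) (Nd (Nd (Lf False) (Lf True)) (Nd (Lf True) (Lf True)))))) (Nd (Nd (Nd (Nd (Nd (Lf False) (Lf False)) (Nd (Lf False) (Lf False))) (Nd (Nd (Lf False) (Lf False)) (Nd (Lf True) (Lf True)))) (Nd (Nd (Nd (Lf False) (Lf False)) (Nd (Lf False) (Lf False))) (Nd (Nd (Lf False) (Lf False)) (Nd (Lf True) (Lf True))))) (Nd (Nd (Nd (Nd (Lf False) (Lf False)) (Nd (Lf False) (Lf False))) (Nd (Nd (Lf False) (Lf True)) (Nd (Lf True) (Lf True)))) (Nd (Nd (Nd (Lf False) (Lf False)) (Nd (Lf False) (Lf False))) (Nd (Nd (Lf False) (Lf True))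 (Nd (Lf True) (Lf True)))))))) (Nd (Nd (Nd (Nd (Nd (Nd (Nd (Lf False) (Lf False)) (Nd (Lf False) (Lf False))) (Nd (Nd (Lf False) (Lf False)) (Nd (Lf False) (Lf False)))) (Nd (Nd (Nd (Lf False) (Lf False)) (Nd (Lf False) (Lf True))) (Nd (Nd (Lf False) (Lf True)) (Nd (Lf False) (Lf True))))) (Nd (Nd (Nd (Nd (Lf False) (Lf False)) (Nd (Lf False) (Lf False))) (Nd (Nd (Lf False) (Lf False)) (Nd (Lf False) (Lf True)))) (Nd (Nd (Nd (Lf False) (Lf False)) (Nd (Lf False) (Lf True))) (Nd (Nd (Lf False) (Lf True)) (Nd (Lf True) (Lf True)))))) (Nd (Nd (Nd (Nd (Nd (Lf False) (Lf False)) (Nd (Lf False) (Lf False))) (Nd (Nd (Lf False) (Lf False)) (Nd (Lf False) (Lf False)))) (Nd (Nd (Nd (Lf False) (Lf False)) (Nd (Lf False) (Lf True))) (Nd (Nd (Lf False) (Lf True)) (Nd (Lf True) (Lf True))))) (Nd (Nd (Nd (Nd (Lf False) (Lf False)) (Nd (Lf False) (Lf False))) (Nd (Nd (Lf False) (Lf True)) (Nd (Lf False) (Lf True)))) (Nd (Nd (Nd (Lf False) (Lf False)) (Nd (Lf False) (Lf True))) (Nd (Nd (Lf False) (Lf True)) (Nd (Lf True) (Lf True))))))) (Nd (Nd (Nd (Nd (Nd (Nd (Lf False) (Lf False)) (Nd (Lf False) (Lf True))) (Nd (Nd (Lf False) (Lf False)) (Nd (Lf False) (Lf True)))) (Nd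 (Nd (Nd (Lf False) (Lf False)) (Nd (Lf False) (Lf True))) (Nd (Nd (Lf False) (Lf True)) (Nd (Lf True) (Lf True))))) (Nd (Nd (Nd (Nd (Lf False) (Lf False)) (Nd (Lf False) (Lf True))) (Nd (Nd (Lf False) (Lf False)) (Nd (Lf False) (Lf True)))) (Nd (Nd (Nd (Lf False) (Lf True)) (Nd (Lf False) (Lf True))) (Nd (Nd (Lf False) (Lf True)) (Nd (Lf True) (Lf True)))))) (Nd (Nd (Nd (Nd (Nd (Lf False) (Lf False)) (Nd (Lf False) (Lf True))) (Nd (Nd (Lf False) (Lf False)) (Nd (Lf True) (Lf True)))) (Nd (Nd (Nd (Lf False) (Lf False)) (Nd (Lf False) (Lf True))) (Nd (Nd (Lf False) (Lf True)) (Nd (Lf True) (Lf True))))) (Nd (Nd (Nd (Nd (Lf False) (Lf False)) (Nd (Lf False) (Lf True))) (Nd (Nd (Lf False) (Lf True)) (Nd (Lf True) (Lf True)))) (Nd (Nd (Nd (Lf False) (Lf True)) (Nd (Lf False) (Lf True))) (Nd (Nd (Lf True) (Lf True)) (Nd (Lf True) (Lf True))))))))) (Nd (Nd (Nd (Nd (Nd (Nd (Nd (Nd (Lf False) (Lf False)) (Nd (Lf False) (Lf False))) (Nd (Nd (Lf False) (Lf False)) (Nd (Lf False) (Lf False)))) (Nd (Nd (Nd (Lf False) (Lf False)) (Nd (Lf False) (Lf True))) (Nd (Nd (Lf False) (Lf False)) (Nd (Lf False) (Lf True))))) (Nd (Nd (Nd (Nd (Lf False) (Lf False)) (Nd (Lf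 False) (Lf False))) (Nd (Nd (Lf False) (Lf False)) (Nd (Lf False) (Lf True)))) (Nd (Nd (Nd (Lf False) (Lf False)) (Nd (Lf False) (Lf True))) (Nd (Nd (Lf False) (Lf True)) (Nd (Lf False) (Lf True)))))) (Nd (Nd (Nd (Nd (Nd (Lf False) (Lf False)) (Nd (Lf False) (Lf False))) (Nd (Nd (Lf False) (Lf False)) (Nd (Lf False) (Lf False)))) (Nd (Nd (Nd (Lf False) (Lf False)) (Nd (Lf False) (Lf True))) (Nd (Nd (Lf False) (Lf False)) (Nd (Lf True) (Lf True))))) (Nd (Nd (Nd (Nd (Lf False) (Lf False)) (Nd (Lf False) (Lf False))) (Nd (Nd (Lf False) (Lf True)) (Nd (Lf False) (Lf True)))) (Nd (Nd (Nd (Lf False) (Lf False)) (Nd (Lf False) (Lf True))) (Nd (Nd (Lf True) (Lf True)) (Nd (Lf True) (Lf True))))))) (Nd (Nd (Nd (Nd (Nd (Nd (Lf False) (Lf False)) (Nd (Lf False) (Lf False))) (Nd (Nd (Lf False) (Lf False)) (Nd (Lf False) (Lf True)))) (Nd (Nd (Nd (Lf False) (Lf False)) (Nd (Lf False) (Lf True))) (Nd (Nd (Lf False) (Lf False)) (Nd (Lf True) (Lf True))))) (Nd (Nd (Nd (Nd (Lf False) (Lf False)) (Nd (Lf False) (Lf False))) (Nd (Nd (Lf False) (Lf False)) (Nd (Lf False) (Lf True)))) (Nd (Nd (Nd (Lf False) (Lf False)) (Nd (Lf False) (Lf True))) (Nd (Nd (Lf True) (Lf True)) (Nd (Lf True)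 (Lf True)))))) (Nd (Nd (Nd (Nd (Nd (Lf False) (Lf False)) (Nd (Lf False) (Lf False))) (Nd (Nd (Lf False) (Lf False)) (Nd (Lf True) (Lf True)))) (Nd (Nd (Nd (Lf False) (Lf False)) (Nd (Lf True) (Lf True))) (Nd (Nd (Lf False) (Lf False)) (Nd (Lf True) (Lf True))))) (Nd (Nd (Nd (Nd (Lf False) (Lf False)) (Nd (Lf False) (Lf False))) (Nd (Nd (Lf True) (Lf True)) (Nd (Lf True) (Lf True)))) (Nd (Nd (Nd (Lf False) (Lf False)) (Nd (Lf True) (Lf True))) (Nd (Nd (Lf True) (Lf True)) (Nd (Lf True) (Lf True)))))))) (Nd (Nd (Nd (Nd (Nd (Nd (Nd (Lf False) (Lf False)) (Nd (Lf False) (Lf False))) (Nd (Nd (Lf False) (Lf False)) (Nd (Lf False) (Lf False)))) (Nd (Nd (Nd (Lf False) (Lf True)) (Nd (Lf False) (Lf True))) (Nd (Nd (Lf False) (Lf True)) (Nd (Lf False) (Lf True))))) (Nd (Nd (Nd (Nd (Lf False) (Lf False)) (Nd (Lf False) (Lf False))) (Nd (Nd (Lf False) (Lf False)) (Nd (Lf False) (Lf True)))) (Nd (Nd (Nd (Lf False) (Lf True)) (Nd (Lf False) (Lf True))) (Nd (Nd (Lf False) (Lf True)) (Nd (Lf True) (Lf True)))))) (Nd (Nd (Nd (Nd (Nd (Lf False) (Lf False)) (Nd (Lf False) (Lf False))) (Nd (Nd (Lf False) (Lf False)) (Nd (Lf False) (Lf False)))) (Nd (Nd (Nd (Lf False)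 (Lf True)) (Nd (Lf False) (Lf True))) (Nd (Nd (Lf False) (Lf True)) (Nd (Lf True) (Lf True))))) (Nd (Nd (Nd (Nd (Lf False) (Lf False)) (Nd (Lf False) (Lf False))) (Nd (Nd (Lf False) (Lf True)) (Nd (Lf False) (Lf True)))) (Nd (Nd (Nd (Lf False) (Lf True)) (Nd (Lf False) (Lf True))) (Nd (Nd (Lf True) (Lf True)) (Nd (Lf True) (Lf True))))))) (Nd (Nd (Nd (Nd (Nd (Nd (Lf False) (Lf False)) (Nd (Lf False) (Lf True))) (Nd (Nd (Lf False) (Lf False)) (Nd (Lf False) (Lf True)))) (Nd (Nd (Nd (Lf False) (Lf True)) (Nd (Lf True) (Lf True))) (Nd (Nd (Lf False) (Lf True)) (Nd (Lf True) (Lf True))))) (Nd (Nd (Nd (Nd (Lf False) (Lf False)) (Nd (Lf False) (Lf True))) (Nd (Nd (Lf False) (Lf False)) (Nd (Lf False) (Lf True)))) (Nd (Nd (Nd (Lf False) (Lf True)) (Nd (Lf True) (Lf True))) (Nd (Nd (Lf True) (Lf True)) (Nd (Lf True) (Lf True)))))) (Nd (Nd (Nd (Nd (Nd (Lf False) (Lf False)) (Nd (Lf False) (Lf True))) (Nd (Nd (Lf False) (Lf True)) (Nd (Lf True) (Lf True)))) (Nd (Nd (Nd (Lf False) (Lf True)) (Nd (Lf True) (Lf True))) (Nd (Nd (Lf False) (Lf True)) (Nd (Lf True) (Lf True))))) (Nd (Nd (Nd (Nd (Lf False) (Lf False)) (Nd (Lf False) (Lf True))) (Nd (Nd (Lf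 True) (Lf True)) (Nd (Lf True) (Lf True)))) (Nd (Nd (Nd (Lf True) (Lf True)) (Nd (Lf True) (Lf True))) (Nd (Nd (Lf True) (Lf True)) (Nd (Lf True) (Lf True)))))))))) (Nd (Nd (Nd (Nd (Nd (Nd (Nd (Nd (Nd (Lf False) (Lf False)) (Nd (Lf False) (Lf False))) (Nd (Nd (Lf False) (Lf False)) (Nd (Lf False) (Lf True)))) (Nd (Nd (Nd (Lf False) (Lf False)) (Nd (Lf False) (Lf True))) (Nd (Nd (Lf False) (Lf False)) (Nd (Lf False) (Lf True))))) (Nd (Nd (Nd (Nd (Lf False) (Lf False)) (Nd (Lf False) (Lf False))) (Nd (Nd (Lf False) (Lf True)) (Nd (Lf False) (Lf True)))) (Nd (Nd (Nd (Lf False) (Lf False)) (Nd (Lf False) (Lf True))) (Nd (Nd (Lf False) (Lf True)) (Nd (Lf False) (Lf True)))))) (Nd (Nd (Nd (Nd (Nd (Lf False) (Lf False)) (Nd (Lf False) (Lf True))) (Nd (Nd (Lf False) (Lf False)) (Nd (Lf False) (Lf True)))) (Nd (Nd (Nd (Lf False) (Lf False)) (Nd (Lf False) (Lf True))) (Nd (Nd (Lf False) (Lf False)) (Nd (Lf True) (Lf True))))) (Nd (Nd (Nd (Nd (Lf False) (Lf False)) (Nd (Lf False) (Lf True))) (Nd (Nd (Lf False) (Lf True)) (Nd (Lf True) (Lf True)))) (Nd (Nd (Nd (Lf False) (Lf False)) (Nd (Lf False) (Lf True))) (Nd (Nd (Lf False) (Lf True)) (Nd (Lf True) (Lf True)))))))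 (Nd (Nd (Nd (Nd (Nd (Nd (Lf False) (Lf False)) (Nd (Lf False) (Lf False))) (Nd (Nd (Lf False) (Lf False)) (Nd (Lf True) (Lf True)))) (Nd (Nd (Nd (Lf False) (Lf False)) (Nd (Lf False) (Lf True))) (Nd (Nd (Lf False) (Lf False)) (Nd (Lf True) (Lf True))))) (Nd (Nd (Nd (Nd (Lf False) (Lf False)) (Nd (Lf False) (Lf False))) (Nd (Nd (Lf False) (Lf True)) (Nd (Lf True) (Lf True)))) (Nd (Nd (Nd (Lf False) (Lf False)) (Nd (Lf False) (Lf True))) (Nd (Nd (Lf False) (Lf True)) (Nd (Lf True) (Lf True)))))) (Nd (Nd (Nd (Nd (Nd (Lf False) (Lf False)) (Nd (Lf False) (Lf True))) (Nd (Nd (Lf False) (Lf False)) (Nd (Lf True) (Lf True)))) (Nd (Nd (Nd (Lf False) (Lf False)) (Nd (Lf False) (Lf True))) (Nd (Nd (Lf False) (Lf False)) (Nd (Lf True) (Lf True))))) (Nd (Nd (Nd (Nd (Lf False) (Lf False)) (Nd (Lf False) (Lf True))) (Nd (Nd (Lf False) (Lf True)) (Nd (Lf True) (Lf True)))) (Nd (Nd (Nd (Lf False) (Lf True)) (Nd (Lf False) (Lf True))) (Nd (Nd (Lf False) (Lf True)) (Nd (Lf True) (Lf True)))))))) (Nd (Nd (Nd (Nd (Nd (Nd (Nd (Lf False) (Lf False)) (Nd (Lf False) (Lf False))) (Nd (Nd (Lf False) (Lf False)) (Nd (Lf False) (Lf True)))) (Nd (Nd (Nd (Lf False) (Lf True))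 (Nd (Lf False) (Lf True))) (Nd (Nd (Lf False) (Lf True)) (Nd (Lf False) (Lf True))))) (Nd (Nd (Nd (Nd (Lf False) (Lf False)) (Nd (Lf False) (Lf True))) (Nd (Nd (Lf False) (Lf True)) (Nd (Lf False) (Lf True)))) (Nd (Nd (Nd (Lf False) (Lf True)) (Nd (Lf False) (Lf True))) (Nd (Nd (Lf False) (Lf True)) (Nd (Lf True) (Lf True)))))) (Nd (Nd (Nd (Nd (Nd (Lf False) (Lf False)) (Nd (Lf False) (Lf True))) (Nd (Nd (Lf False) (Lf False)) (Nd (Lf False) (Lf True)))) (Nd (Nd (Nd (Lf False) (Lf True)) (Nd (Lf False) (Lf True))) (Nd (Nd (Lf True) (Lf True)) (Nd (Lf True) (Lf True))))) (Nd (Nd (Nd (Nd (Lf False) (Lf False)) (Nd (Lf False) (Lf True))) (Nd (Nd (Lf False) (Lf True)) (Nd (Lf True) (Lf True)))) (Nd (Nd (Nd (Lf False) (Lf True)) (Nd (Lf True) (Lf True))) (Nd (Nd (Lf True) (Lf True)) (Nd (Lf True) (Lf True))))))) (Nd (Nd (Nd (Nd (Nd (Nd (Lf False) (Lf False)) (Nd (Lf False) (Lf True))) (Nd (Nd (Lf False) (Lf False)) (Nd (Lf True) (Lf True)))) (Nd (Nd (Nd (Lf False) (Lf True)) (Nd (Lf False) (Lf True))) (Nd (Nd (Lf False) (Lf True)) (Nd (Lf True) (Lf True))))) (Nd (Nd (Nd (Nd (Lf False) (Lf True)) (Nd (Lf False) (Lf True))) (Nd (Nd (Lf False) (Lf True))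 (Nd (Lf True) (Lf True)))) (Nd (Nd (Nd (Lf False) (Lf True)) (Nd (Lf False) (Lf True))) (Nd (Nd (Lf False) (Lf True)) (Nd (Lf True) (Lf True)))))) (Nd (Nd (Nd (Nd (Nd (Lf False) (Lf False)) (Nd (Lf False) (Lf True))) (Nd (Nd (Lf False) (Lf False)) (Nd (Lf True) (Lf True)))) (Nd (Nd (Nd (Lf False) (Lf True)) (Nd (Lf False) (Lf True))) (Nd (Nd (Lf True) (Lf True)) (Nd (Lf True) (Lf True))))) (Nd (Nd (Nd (Nd (Lf False) (Lf True)) (Nd (Lf False) (Lf True))) (Nd (Nd (Lf False) (Lf True)) (Nd (Lf True) (Lf True)))) (Nd (Nd (Nd (Lf True) (Lf True)) (Nd (Lf True) (Lf True))) (Nd (Nd (Lf True) (Lf True)) (Nd (Lf True) (Lf True))))))))) (Nd (Nd (Nd (Nd (Nd (Nd (Nd (Nd (Lf False) (Lf False)) (Nd (Lf False) (Lf False))) (Nd (Nd (Lf False) (Lf False)) (Nd (Lf False) (Lf True)))) (Nd (Nd (Nd (Lf False) (Lf False)) (Nd (Lf True) (Lf True))) (Nd (Nd (Lf False) (Lf False)) (Nd (Lf True) (Lf True))))) (Nd (Nd (Nd (Nd (Lf False) (Lf False)) (Nd (Lf False) (Lf False))) (Nd (Nd (Lf False) (Lf True)) (Nd (Lf False) (Lf True)))) (Nd (Nd (Nd (Lf False) (Lf False)) (Nd (Lf True) (Lf True))) (Nd (Nd (Lf False) (Lf True)) (Nd (Lf True) (Lf True)))))) (Nd (Nd (Nd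 (Nd (Nd (Lf False) (Lf False)) (Nd (Lf False) (Lf True))) (Nd (Nd (Lf False) (Lf False)) (Nd (Lf False) (Lf True)))) (Nd (Nd (Nd (Lf False) (Lf False)) (Nd (Lf True) (Lf True))) (Nd (Nd (Lf False) (Lf False)) (Nd (Lf True) (Lf True))))) (Nd (Nd (Nd (Nd (Lf False) (Lf False)) (Nd (Lf False) (Lf True))) (Nd (Nd (Lf False) (Lf True)) (Nd (Lf True) (Lf True)))) (Nd (Nd (Nd (Lf False) (Lf False)) (Nd (Lf True) (Lf True))) (Nd (Nd (Lf True) (Lf True)) (Nd (Lf True) (Lf True))))))) (Nd (Nd (Nd (Nd (Nd (Nd (Lf False) (Lf False)) (Nd (Lf False) (Lf False))) (Nd (Nd (Lf False) (Lf False)) (Nd (Lf True) (Lf True)))) (Nd (Nd (Nd (Lf False) (Lf False)) (Nd (Lf True) (Lf True))) (Nd (Nd (Lf False) (Lf True)) (Nd (Lf True) (Lf True))))) (Nd (Nd (Nd (Nd (Lf False) (Lf False)) (Nd (Lf False) (Lf False))) (Nd (Nd (Lf False) (Lf True)) (Nd (Lf True) (Lf True)))) (Nd (Nd (Nd (Lf False) (Lf False)) (Nd (Lf True) (Lf True))) (Nd (Nd (Lf True) (Lf True)) (Nd (Lf True) (Lf True)))))) (Nd (Nd (Nd (Nd (Nd (Lf False) (Lf False)) (Nd (Lf False) (Lf True))) (Nd (Nd (Lf False) (Lf False)) (Nd (Lf True) (Lf True)))) (Nd (Nd (Nd (Lf False) (Lf False)) (Nd (Lf True) (Lf True))) (Nd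 (Nd (Lf False) (Lf True)) (Nd (Lf True) (Lf True))))) (Nd (Nd (Nd (Nd (Lf False) (Lf True)) (Nd (Lf False) (Lf True))) (Nd (Nd (Lf True) (Lf True)) (Nd (Lf True) (Lf True)))) (Nd (Nd (Nd (Lf False) (Lf True)) (Nd (Lf True) (Lf True))) (Nd (Nd (Lf True) (Lf True)) (Nd (Lf True) (Lf True)))))))) (Nd (Nd (Nd (Nd (Nd (Nd (Nd (Lf False) (Lf False)) (Nd (Lf False) (Lf False))) (Nd (Nd (Lf False) (Lf False)) (Nd (Lf False) (Lf True)))) (Nd (Nd (Nd (Lf False) (Lf True)) (Nd (Lf True) (Lf True))) (Nd (Nd (Lf False) (Lf True)) (Nd (Lf True) (Lf True))))) (Nd (Nd (Nd (Nd (Lf False) (Lf False)) (Nd (Lf False) (Lf True))) (Nd (Nd (Lf False) (Lf True)) (Nd (Lf False) (Lf True)))) (Nd (Nd (Nd (Lf False) (Lf True)) (Nd (Lf True) (Lf True))) (Nd (Nd (Lf False) (Lf True)) (Nd (Lf True) (Lf True)))))) (Nd (Nd (Nd (Nd (Nd (Lf False) (Lf False)) (Nd (Lf False) (Lf True))) (Nd (Nd (Lf False) (Lf False)) (Nd (Lf True) (Lf True)))) (Nd (Nd (Nd (Lf True) (Lf True)) (Nd (Lf True) (Lf True))) (Nd (Nd (Lf True) (Lf True)) (Nd (Lf True) (Lf True))))) (Nd (Nd (Nd (Nd (Lf False) (Lf False)) (Nd (Lf False) (Lf True))) (Nd (Nd (Lf False) (Lf True)) (Nd (Lf True) (Lf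 True)))) (Nd (Nd (Nd (Lf True) (Lf True)) (Nd (Lf True) (Lf True))) (Nd (Nd (Lf True) (Lf True)) (Nd (Lf True) (Lf True))))))) (Nd (Nd (Nd (Nd (Nd (Nd (Lf False) (Lf False)) (Nd (Lf False) (Lf True))) (Nd (Nd (Lf False) (Lf False)) (Nd (Lf True) (Lf True)))) (Nd (Nd (Nd (Lf False) (Lf True)) (Nd (Lf True) (Lf True))) (Nd (Nd (Lf False) (Lf True)) (Nd (Lf True) (Lf True))))) (Nd (Nd (Nd (Nd (Lf False) (Lf True)) (Nd (Lf False) (Lf True))) (Nd (Nd (Lf False) (Lf True)) (Nd (Lf True) (Lf True)))) (Nd (Nd (Nd (Lf False) (Lf True)) (Nd (Lf True) (Lf True))) (Nd (Nd (Lf True) (Lf True)) (Nd (Lf True) (Lf True)))))) (Nd (Nd (Nd (Nd (Nd (Lf False) (Lf True)) (Nd (Lf False) (Lf True))) (Nd (Nd (Lf True) (Lf True)) (Nd (Lf True) (Lf True)))) (Nd (Nd (Nd (Lf True) (Lf True)) (Nd (Lf True) (Lf True))) (Nd (Nd (Lf True) (Lf True)) (Nd (Lf True) (Lf True))))) (Nd (Nd (Nd (Nd (Lf False) (Lf True)) (Nd (Lf True) (Lf True))) (Nd (Nd (Lf True) (Lf True)) (Nd (Lf True) (Lf True)))) (Nd (Nd (Nd (Lf True) (Lf True)) (Nd (Lf True) (Lf True))) (Nd (Nd (Lf True) (Lf True)) (Nd (Lf True) (Lf True)))))))))))"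

definition cnt :: "nat \<Rightarrow> bt \<Rightarrow> nat" where
  "cnt i T = length (remdups (filter hasT (subs i T)))"

definition good :: "nat \<Rightarrow> bt \<Rightarrow> bool" where
  "good n T \<longleftrightarrow> bal n T \<and> monoT T \<and> hasT T \<and>
     (\<forall>i\<in>set [0..<Suc n]. cnt i T = 2 ^ i \<or> (n - i \<le> 3 \<and> [2,3,6,20] ! (n - i) \<le> cnt i T + 1))"

lemma good0: "good 0 W0" unfolding W0_def good_def cnt_def by code_simp
lemma good1: "good 1 W1" unfolding W1_def good_def cnt_def by code_simp
lemma good2: "good 2 W2" unfolding W2_def good_def cnt_def by code_simp
lemma good3: "good 3 W3" unfolding W3_def good_def cnt_def by code_simp
lemma good4: "good 4 W4" unfolding W4_def good_def cnt_def by code_simp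
lemma good5: "good 5 W5" unfolding W5_def good_def cnt_def by code_simp
lemma good6: "good 6 W6" unfolding W6_def good_def cnt_def by code_simp
lemma good7: "good 7 W7" unfolding W7_def good_def cnt_def by code_simp
lemma good8: "good 8 W8" unfolding W8_def good_def cnt_def by code_simp
lemma good9: "good 9 W9" unfolding W9_def good_def cnt_def by code_simp
lemma good10: "good 10 W10" unfolding W10_def good_def cnt_def by code_simp




lemma good_witness:
  assumes g: "good n T"
  shows "monotone_lang n {w. lk T w} \<and>
    min_pdfa_states {w. lk T w} = (\<Sum>i = 0..n. min (2 ^ i) (card (monotone_bool_funs (n - i)) - 1))"
proof -
  define L where "L = {w. lk T w}"
  have bT: "bal n T" and mT: "monoT T" and hT: "hasT T" using g unfolding good_def by auto
  have lev: "cnt i T = 2 ^ i \<or> (n - i \<le> 3 \<and> [2,3,6,20] ! (n - i) \<le> cnt i T + 1)" if "i \<le> n" for i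
  proof -
    have A: "\<forall>i\<in>set [0..<Suc n]. cnt i T = 2 ^ i \<or> (n - i \<le> 3 \<and> [2,3,6,20] ! (n - i) \<le> cnt i T + 1)"
      using g unfolding good_def by blast
    have "i \<in> set [0..<Suc n]" using that by (simp del: upt_Suc)
    with A show ?thesis by blast
  qed
  have Ln: "L \<subseteq> {w. length w = n}" unfolding L_def using lk_len[OF bT] by blast
  have M: "monotone_lang n L"
    unfolding monotone_lang_def
  proof (intro conjI ballI allI impI)
    show "L \<subseteq> {w. length w = n}" by (rule Ln)
    fix s t assume s: "s \<in> L" and H: "length t = n \<and> (\<forall>j<n. s ! j \<le> t ! j)"
    have "length s = n" using Ln s by blast
    then have "lk T s \<le> lk T t"
      using monoT_iff[OF bT, THEN iffD1, OF mT, rule_format, of s t] H by blast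
    then show "t \<in> L" using s unfolding L_def by simp
  qed
  have ne: "L \<noteq> {}" using hT hasT_iff unfolding L_def by blast
  have cardI: "card (ResI L i) = cnt i T" if i: "i \<le> n" for i
  proof -
    let ?S = "set (filter hasT (subs i T))"
    have S: "?S = {sub T w | w. length w = i \<and> hasT (sub T w)}"
      using set_subs[OF bT i] by auto
    have der: "deriv w L = {v. lk (sub T w) v}" for w
      unfolding deriv_def L_def by (simp add: lk_sub)
    have "ResI L i = (\<lambda>t. {v. lk t v}) ` ?S"
      unfolding S ResI_def der using hasT_iff by auto
    moreover have "inj_on (\<lambda>t. {v. lk t v}) ?S"
    proof (rule inj_onI)
      fix x y assume "x \<in> ?S" "y \<in> ?S" and e: "{v. lk x v} = {v. lk y v}"
      then obtain wx wy where "x = sub T wx" "length wx = i" "y = sub T wy" "length wy = i"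
        unfolding S by blast
      then have "bal (n - i) x" "bal (n - i) y" using bal_sub[OF bT, of wx] bal_sub[OF bT, of wy] i by auto
      moreover have "\<forall>w. lk x w = lk y w" using e by blast
      ultimately show "x = y" using lk_inj by blast
    qed
    ultimately have "card (ResI L i) = card ?S" by (simp add: card_image)
    also have "\<dots> = cnt i T" unfolding cnt_def by (simp add: length_remdups_card_conv)
    finally show ?thesis .
  qed
  have ge: "min (2 ^ i) (card (monotone_bool_funs (n - i)) - 1) \<le> card (ResI L i)" if i: "i \<le> n" for i
  proof (cases "cnt i T = 2 ^ i")
    case True then show ?thesis using cardI[OF i] by simp
  next
    case False
    then have k: "n - i \<le> 3" and c: "[2,3,6,20] ! (n - i) \<le> cnt i T + 1" using lev[OF i] by auto
    have "card (monotone_bool_funs (n - i)) \<le> [2,3,6,20] ! (n - i)"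
    proof -
      have "n - i = 0 \<or> n - i = 1 \<or> n - i = 2 \<or> n - i = 3" using k by arith
      then show ?thesis using card_mbf_le[of "n - i"] D_vals by auto
    qed
    then show ?thesis using c cardI[OF i] by simp
  qed
  have "min_pdfa_states L = (\<Sum>i = 0..n. card (ResI L i))"
    using min_states_eq[OF card_Res(2)[OF Ln] ne] card_Res(1)[OF Ln] by simp
  also have "\<dots> = (\<Sum>i = 0..n. min (2 ^ i) (card (monotone_bool_funs (n - i)) - 1))"
  proof (rule antisym)
    show "(\<Sum>i = 0..n. card (ResI L i)) \<le> (\<Sum>i = 0..n. min (2 ^ i) (card (monotone_bool_funs (n - i)) - 1))"
      using ResI_card_le_pow ResI_card_le_mbf[OF M] by (intro sum_mono) simp
    show "(\<Sum>i = 0..n. min (2 ^ i) (card (monotone_bool_funs (n - i)) - 1)) \<le> (\<Sum>i = 0..n. card (ResI L i))"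
      using ge by (intro sum_mono) simp
  qed
  finally show ?thesis using M unfolding L_def by simp
qed

theorem mainTheorem4:
  shows "(\<forall>n L. monotone_lang n L \<longrightarrow>
            min_pdfa_states L \<le> (\<Sum>i = 0..n. min (2 ^ i) (card (monotone_bool_funs (n - i)) - 1)))
       \<and> (\<forall>n \<le> 10. \<exists>L. monotone_lang n L \<and>
            min_pdfa_states L = (\<Sum>i = 0..n. min (2 ^ i) (card (monotone_bool_funs (n - i)) - 1)))"
proof (intro conjI allI impI)
  fix n L assume "monotone_lang n L" then show "min_pdfa_states L \<le> (\<Sum>i = 0..n. min (2 ^ i) (card (monotone_bool_funs (n - i)) - 1))"
    by (rule part1)
next
  fix n :: nat assume "n \<le> 10"
  then have "n = 0 \<or> n = 1 \<or> n = 2 \<or> n = 3 \<or> n = 4 \<or> n = 5 \<or> n = 6 \<or> n = 7 \<or> n = 8 \<or> n = 9 \<or> n = 10"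
    by arith
  then show "\<exists>L. monotone_lang n L \<and>
            min_pdfa_states L = (\<Sum>i = 0..n. min (2 ^ i) (card (monotone_bool_funs (n - i)) - 1))"
    using good_witness[OF good0] good_witness[OF good1] good_witness[OF good2] good_witness[OF good3]
      good_witness[OF good4] good_witness[OF good5] good_witness[OF good6] good_witness[OF good7]
      good_witness[OF good8] good_witness[OF good9] good_witness[OF good10]
    by (elim disjE) blast+
qed


end
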